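(* Let $P=\{(x,y,z)\in\mathbb{R}^3: z=\tfrac12xy\}$. Then $(P,d_{\mathbb{H}})$ bi-Lipschitz embeds in $\mathbb{R}^{19}$.
   Context: For $p=(x,y,z)$, $q=(x',y',z')$, $d_{\mathbb{H}}(p,q)=|x-x'|+|y-y'|+|z-z'+\tfrac12(xy'-x'y)|^{1/2}$. $(A,d_{\mathbb{H}})$ bi-Lipschitz embeds in $\mathbb{R}^{N}$ if there are $L\ge1$ and $f:A\to\mathbb{R}^N$ with $L^{-1}d_{\mathbb{H}}(a,b)\le|f(a)-f(b)|\le Ld_{\mathbb{H}}(a,b)$ for all $a,b\in A$. *)

theory Defs
  imports "HOL-Analysis.Analysis" "HOL-Library.Numeral_Type"
begin

definition heis_dist :: "real \<times> real \<times> real \<Rightarrow> real \<times> real \<times> real \<Rightarrow> real" where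
  "heis_dist p q = (case p of (x, y, z) \<Rightarrow> case q of (x', y', z') \<Rightarrow>
      \<bar>x - x'\<bar> + \<bar>y - y'\<bar> + sqrt \<bar>z - z' + (1/2) * (x * y' - x' * y)\<bar>)"

definition bilip_embeds :: "('a \<Rightarrow> 'a \<Rightarrow> real) \<Rightarrow> 'a set \<Rightarrow> 'b::real_normed_vector itself \<Rightarrow> bool" where
  "bilip_embeds d A T \<longleftrightarrow> (\<exists>L::real. \<exists>f::'a \<Rightarrow> 'b. L \<ge> 1 \<and>
      (\<forall>a\<in>A. \<forall>b\<in>A. d a b / L \<le> norm (f a - f b) \<and> norm (f a - f b) \<le> L * d a b))"

definition heis_plane :: "(real \<times> real \<times> real) set" where
  "heis_plane = {(x, y, z). z = (1/2) * x * y}"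

end

theory Submission
  imports Defs
begin


lemma geo_nat_has_sum:
  fixes q :: real assumes "0 \<le> q" "q < 1"
  shows "((\<lambda>n::nat. q ^ n) has_sum (1 / (1 - q))) UNIV"
  using assms by (intro sums_nonneg_imp_has_sum geometric_sums) auto

lemma geo_int_has_sum:
  fixes q :: real and m :: int assumes q: "0 \<le> q" "q < 1"
  shows "((\<lambda>k::int. q ^ nat \<bar>k - m\<bar>) has_sum ((1 + q) / (1 - q))) UNIV"
proof -
  have b1: "bij_betw (\<lambda>n::nat. m + int n) UNIV {m..}"
    by (rule bij_betw_byWitness[where f'="\<lambda>k. nat (k - m)"]) auto
  have b2: "bij_betw (\<lambda>n::nat. m - 1 - int n) UNIV {..<m}"
    by (rule bij_betw_byWitness[where f'="\<lambda>k. nat (m - 1 - k)"]) auto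
  have h1: "((\<lambda>k::int. q ^ nat \<bar>k - m\<bar>) has_sum (1 / (1 - q))) {m..}"
    using has_sum_reindex_bij_betw[OF b1, where f="\<lambda>k::int. q ^ nat \<bar>k - m\<bar>"] geo_nat_has_sum[OF q]
    by simp
  have "((\<lambda>n::nat. q * q ^ n) has_sum (q * (1 / (1 - q)))) UNIV"
    using geo_nat_has_sum[OF q] by (rule has_sum_cmult_right)
  then have h2: "((\<lambda>k::int. q ^ nat \<bar>k - m\<bar>) has_sum (q / (1 - q))) {..<m}"
    using has_sum_reindex_bij_betw[OF b2, where f="\<lambda>k::int. q ^ nat \<bar>k - m\<bar>"]
    by (simp add: nat_add_distrib power_add[symmetric])
  have "((\<lambda>k::int. q ^ nat \<bar>k - m\<bar>) has_sum (1 / (1 - q) + q / (1 - q))) ({m..} \<union> {..<m})"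
    by (rule has_sum_Un_disjoint[OF h1 h2]) auto
  moreover have "{m..} \<union> {..<m} = (UNIV::int set)" by auto
  moreover have "1 / (1 - q) + q / (1 - q) = (1 + q) / (1 - q)" by (simp add: add_divide_distrib)
  ultimately show ?thesis by simp
qed

lemma geo_bound:
  fixes f :: "int \<Rightarrow> 'a::banach" and q C :: real
  assumes q: "0 \<le> q" "q < 1" and C: "0 \<le> C"
    and B: "\<And>k. k \<in> B \<Longrightarrow> norm (f k) \<le> C * q ^ nat \<bar>k - m\<bar>"
  shows "f summable_on B" "(\<lambda>k. norm (f k)) summable_on B"
    "infsum (\<lambda>k. norm (f k)) B \<le> C * ((1 + q) / (1 - q))"
    "B \<subseteq> - {m} \<Longrightarrow> infsum (\<lambda>k. norm (f k)) B \<le> C * (2 * q / (1 - q))"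
proof -
  define g where "g k = C * q ^ nat \<bar>k - m\<bar>" for k
  have gs: "(g has_sum (C * ((1 + q) / (1 - q)))) UNIV"
    unfolding g_def by (rule has_sum_cmult_right[OF geo_int_has_sum[OF q]])
  have g0: "g k \<ge> 0" for k using q C unfolding g_def by auto
  have gU: "g summable_on UNIV" using gs by (auto simp: summable_on_def)
  have gB: "g summable_on B" using summable_on_subset_banach[OF gU] by auto
  show ns: "(\<lambda>k. norm (f k)) summable_on B"
    by (rule summable_on_comparison_test[OF gB]) (use B in \<open>auto simp: g_def\<close>)
  then show "f summable_on B" by (rule abs_summable_summable)
  have le1: "infsum (\<lambda>k. norm (f k)) B \<le> infsum g B"
    by (rule infsum_mono[OF ns gB]) (use B in \<open>auto simp: g_def\<close>)
  have "infsum g B \<le> infsum g UNIV"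
    by (rule infsum_mono_neutral[OF gB]) (use gs g0 in \<open>auto simp: summable_on_def\<close>)
  also have "\<dots> = C * ((1 + q) / (1 - q))" using gs by (rule infsumI)
  finally show "infsum (\<lambda>k. norm (f k)) B \<le> C * ((1 + q) / (1 - q))" using le1 by linarith
  assume Bm: "B \<subseteq> - {m}"
  have gm: "g summable_on (- {m})" using summable_on_subset_banach[OF gU] by auto
  have "infsum g B \<le> infsum g (- {m})"
    by (rule infsum_mono_neutral[OF gB gm]) (use Bm g0 in auto)
  also have "infsum g (- {m}) = C * ((1 + q) / (1 - q)) - C"
  proof -
    have "infsum g (insert m (- {m})) = g m + infsum g (- {m})"
      by (rule infsum_insert[OF gm]) auto
    moreover have "insert m (- {m}) = UNIV" by auto
    moreover have "g m = C" by (simp add: g_def)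
    ultimately show ?thesis using infsumI[OF gs] by simp
  qed
  also have "\<dots> = C * (2 * q / (1 - q))" using q by (simp add: field_simps)
  finally show "infsum (\<lambda>k. norm (f k)) B \<le> C * (2 * q / (1 - q))" using le1 by linarith
qed



lemma blk: "((of_int k :: 8) = of_int k0) \<longleftrightarrow> k mod 8 = k0 mod 8"
proof
  assume "(of_int k :: 8) = of_int k0"
  then have "Rep_bit0 (of_int k :: 8) = Rep_bit0 (of_int k0 :: 8)" by simp
  then show "k mod 8 = k0 mod 8" unfolding bit0.of_int_eq bit0.Rep_Abs_mod by simp
next
  assume "k mod 8 = k0 mod 8"
  then show "(of_int k :: 8) = of_int k0" by (simp add: bit0.of_int_eq)
qed

lemma ex_scale:
  fixes v :: real assumes "v > 0"
  shows "\<exists>m::int. 1 \<le> 2 powr m * v \<and> 2 powr m * v < 2"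
proof -
  define m where "m = \<lceil>log 2 (1 / v)\<rceil>"
  have "2 powr (log 2 (1/v)) = 1 / v" using assms by simp
  moreover have "2 powr (log 2 (1/v)) \<le> 2 powr m" unfolding m_def by simp
  moreover have "2 powr (real_of_int m - 1) < 2 powr (log 2 (1/v))"
    unfolding m_def by (intro powr_less_mono) linarith+
  moreover have "2 powr (real_of_int m - 1) = 2 powr m / 2" by (simp add: powr_diff)
  ultimately show ?thesis using assms
    by (intro exI[of _ m]) (auto simp: field_simps)
qed

lemma powr_shift1:
  fixes k m :: int assumes "m \<le> k"
  shows "(2::real) powr k = 2 powr m * 2 ^ nat \<bar>k - m\<bar>"
proof -
  define n where "n = nat \<bar>k - m\<bar>"
  have "real_of_int k = real_of_int m + real n" using assms by (simp add: n_def)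
  then have "(2::real) powr k = 2 powr m * 2 powr (real n)" by (simp add: powr_add)
  then show ?thesis by (simp add: powr_realpow n_def[symmetric])
qed

lemma powr_shift2:
  fixes k m :: int assumes "k \<le> m"
  shows "(2::real) powr m = 2 powr k * 2 ^ nat \<bar>k - m\<bar>"
proof -
  define n where "n = nat \<bar>k - m\<bar>"
  have "real_of_int m = real_of_int k + real n" using assms by (simp add: n_def)
  then have "(2::real) powr m = 2 powr k * 2 powr (real n)" by (simp add: powr_add)
  then show ?thesis by (simp add: powr_realpow n_def[symmetric])
qed

definition qq :: real where "qq = sqrt (1/2)"

lemma qq_props: "0 \<le> qq" "qq < 1" "qq ^ 2 = 1/2"
  by (auto simp: qq_def)

lemma half_pow_le: "(1/2::real) ^ n \<le> qq ^ n"
proof -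
  have "(qq ^ n) ^ 2 = (qq ^ 2) ^ n" by (metis power_mult mult.commute)
  then have "(1/2::real) ^ n = (qq ^ n) ^ 2" by (simp add: qq_props)
  also have "\<dots> \<le> qq ^ n"
  proof -
    have "qq ^ n \<le> 1" "0 \<le> qq ^ n" using qq_props by (auto intro: power_le_one)
    then have "qq ^ n * qq ^ n \<le> qq ^ n * 1" by (intro mult_left_mono) auto
    then show ?thesis by (simp add: power2_eq_square)
  qed
  finally show ?thesis .
qed

lemma sqrt_half_pow: "sqrt (1 / 2 ^ n) = qq ^ n"
  by (simp add: qq_def real_sqrt_power[symmetric] power_divide)

lemma sqrt_le_self: "1 \<le> t \<Longrightarrow> sqrt t \<le> (t::real)"
proof -
  assume t: "1 \<le> t"
  then have "1 \<le> sqrt t" by simp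
  then have "1 * sqrt t \<le> sqrt t * sqrt t" by (intro mult_right_mono) auto
  then show ?thesis using t by simp
qed

definition bb :: "real \<Rightarrow> real" where "bb t = min (sqrt t) (t ^ 2)"

lemma bb_small: "0 \<le> t \<Longrightarrow> t \<le> 1 \<Longrightarrow> bb t = t ^ 2"
proof -
  assume t: "0 \<le> t" "t \<le> 1"
  have "t * t \<le> t * 1" using t by (intro mult_left_mono) auto
  then have "t ^ 2 \<le> t" by (simp add: power2_eq_square)
  also have "t \<le> sqrt t" using \<open>t ^ 2 \<le> t\<close> by (rule real_le_rsqrt)
  finally show ?thesis by (simp add: bb_def)
qed

lemma bb_large: "1 \<le> t \<Longrightarrow> bb t = sqrt t"
proof -
  assume t: "1 \<le> t"
  have "sqrt t \<le> t" using t by (rule sqrt_le_self)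
  also have "1 * t \<le> t * t" using t by (intro mult_right_mono) auto
  then have "t \<le> t ^ 2" by (simp add: power2_eq_square)
  finally show ?thesis by (simp add: bb_def)
qed

lemma bb_nonneg: "0 \<le> t \<Longrightarrow> 0 \<le> bb t" by (simp add: bb_def)

lemma bb_mono: "0 \<le> s \<Longrightarrow> s \<le> t \<Longrightarrow> bb s \<le> bb t"
  unfolding bb_def by (intro min.mono real_sqrt_le_mono power_mono) auto

lemma bb_lip: "0 \<le> s \<Longrightarrow> s \<le> t \<Longrightarrow> bb t - bb s \<le> 2 * (t - s)"
proof -
  assume st: "0 \<le> s" "s \<le> t"
  consider "t \<le> 1" | "1 \<le> s" | "s < 1" "1 < t" by linarith
  then show ?thesis
  proof cases
    case 1
    then have "bb t - bb s = (t + s) * (t - s)" using st by (simp add: bb_small power2_eq_square algebra_simps)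
    also have "\<dots> \<le> 2 * (t - s)" using st 1 by (intro mult_right_mono) auto
    finally show ?thesis .
  next
    case 2
    have "sqrt t - sqrt s \<le> t - s"
    proof -
      have "sqrt t * sqrt t - sqrt s * sqrt s = (sqrt t + sqrt s) * (sqrt t - sqrt s)" by (simp add: algebra_simps)
      moreover have "sqrt t + sqrt s \<ge> 1" using 2 st by (simp add: add_increasing)
      moreover have "sqrt t - sqrt s \<ge> 0" using st by (simp add: real_sqrt_le_mono)
      ultimately have "1 * (sqrt t - sqrt s) \<le> (sqrt t + sqrt s) * (sqrt t - sqrt s)"
        by (intro mult_right_mono) auto
      then have "sqrt t - sqrt s \<le> sqrt t * sqrt t - sqrt s * sqrt s"
        by (simp add: algebra_simps)
      then show ?thesis using st 2 by simp
    qed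
    then show ?thesis using 2 st by (simp add: bb_large)
  next
    case 3
    have "sqrt t - 1 \<le> t - 1" using 3 sqrt_le_self[of t] by simp
    moreover have "2 * (1 - s) - (1 - s ^ 2) = (1 - s) ^ 2" by (simp add: power2_eq_square algebra_simps)
    then have "1 - s ^ 2 \<le> 2 * (1 - s)" using zero_le_power2[of "1 - s"] by linarith
    ultimately show ?thesis using 3 st by (simp add: bb_large bb_small)
  qed
qed



definition aa :: "int \<Rightarrow> real \<Rightarrow> real" where "aa k u = bb (2 powr k * u) / 2 powr k"

lemma sqrt_div_mult: "0 < (e::real) \<Longrightarrow> 0 \<le> u \<Longrightarrow> sqrt (u / e) * e = sqrt (u * e)"
proof -
  assume e: "0 < e" and u: "0 \<le> u"
  have ee: "sqrt e * sqrt e = e" using e by simp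
  have se: "sqrt e \<noteq> 0" using e by simp
  have "sqrt (u / e) * e = sqrt u / sqrt e * (sqrt e * sqrt e)" using e by (simp add: real_sqrt_divide ee)
  also have "\<dots> = sqrt u * sqrt e" using se by (simp del: real_sqrt_mult_self)
  finally show ?thesis by (simp add: real_sqrt_mult)
qed

lemma sqrt_div_pow: "sqrt (x / 2 ^ n) = sqrt x * qq ^ n"
  by (simp add: real_sqrt_divide sqrt_half_pow[symmetric] real_sqrt_power)

lemma aa_nonneg: "0 \<le> u \<Longrightarrow> 0 \<le> aa k u"
  by (simp add: aa_def bb_nonneg)

lemma aa_le_sqrt: "0 \<le> u \<Longrightarrow> aa k u \<le> sqrt (u / 2 powr k)"
proof -
  assume u: "0 \<le> u"
  have e: "(0::real) < 2 powr k" by simp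
  have "aa k u \<le> sqrt (2 powr k * u) / 2 powr k" unfolding aa_def bb_def
    by (intro divide_right_mono) auto
  also have "\<dots> = sqrt (u / 2 powr k)"
    using sqrt_div_mult[OF e u] e by (simp add: field_simps mult.commute)
  finally show ?thesis .
qed

lemma aa_le_sq: "aa k u \<le> 2 powr k * u ^ 2"
proof -
  have "aa k u \<le> (2 powr k * u) ^ 2 / 2 powr k" unfolding aa_def bb_def
    by (intro divide_right_mono) auto
  also have "\<dots> = 2 powr k * u ^ 2" by (simp add: power2_eq_square)
  finally show ?thesis .
qed

lemma aa_large: "0 \<le> u \<Longrightarrow> 1 \<le> 2 powr k * u \<Longrightarrow> aa k u = sqrt (u / 2 powr k)"
proof -
  assume u: "0 \<le> u" and l: "1 \<le> 2 powr k * u"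
  have e: "(0::real) < 2 powr k" by simp
  have "aa k u = sqrt (2 powr k * u) / 2 powr k" unfolding aa_def using bb_large[OF l] by simp
  also have "\<dots> = sqrt (u / 2 powr k)"
    using sqrt_div_mult[OF e u] e by (simp add: field_simps mult.commute)
  finally show ?thesis .
qed

lemma aa_small: "0 \<le> u \<Longrightarrow> 2 powr k * u \<le> 1 \<Longrightarrow> aa k u = 2 powr k * u ^ 2"
  unfolding aa_def by (simp add: bb_small power2_eq_square)

lemma aa_mono: "0 \<le> u \<Longrightarrow> u \<le> u' \<Longrightarrow> aa k u \<le> aa k u'"
  unfolding aa_def by (intro divide_right_mono bb_mono) auto

lemma aa_zero: "aa k 0 = 0" by (simp add: aa_def bb_def)

lemma aa_decay:
  assumes u: "0 < u" and m: "1 \<le> 2 powr m * u" "2 powr m * u < 2"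
  shows "aa k u \<le> 2 * u * qq ^ nat \<bar>k - m\<bar>"
proof (cases "m \<le> k")
  case True
  have "aa k u \<le> sqrt (u / 2 powr k)" using u by (simp add: aa_le_sqrt)
  also have "\<dots> = sqrt ((u / 2 powr m) / 2 ^ nat \<bar>k - m\<bar>)"
    by (simp add: powr_shift1[OF True] field_simps)
  also have "\<dots> = sqrt (u / 2 powr m) * qq ^ nat \<bar>k - m\<bar>" by (rule sqrt_div_pow)
  also have "\<dots> \<le> u * qq ^ nat \<bar>k - m\<bar>"
  proof (rule mult_right_mono)
    have "u / 2 powr m \<le> u ^ 2" using m u by (simp add: field_simps power2_eq_square)
    then have "sqrt (u / 2 powr m) \<le> sqrt (u ^ 2)" by (rule real_sqrt_le_mono)
    then show "sqrt (u / 2 powr m) \<le> u" using u by simp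
  qed (simp add: qq_props)
  also have "\<dots> \<le> 2 * u * qq ^ nat \<bar>k - m\<bar>" using u qq_props by simp
  finally show ?thesis .
next
  case False
  then have km: "k \<le> m" by simp
  have "aa k u \<le> 2 powr k * u ^ 2" by (rule aa_le_sq)
  also have "\<dots> = (2 powr m * u) * u * (1/2) ^ nat \<bar>k - m\<bar>"
    by (simp add: powr_shift2[OF km] power2_eq_square power_one_over field_simps)
  also have "\<dots> \<le> 2 * u * qq ^ nat \<bar>k - m\<bar>"
  proof -
    have "(2 powr m * u) * u \<le> 2 * u" using m u by (intro mult_right_mono) auto
    moreover have "(1/2::real) ^ nat \<bar>k - m\<bar> \<le> qq ^ nat \<bar>k - m\<bar>" by (rule half_pow_le)
    ultimately show ?thesis using u by (intro mult_mono) auto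
  qed
  finally show ?thesis .
qed

lemma aa_decay_ex: "0 \<le> u \<Longrightarrow> \<exists>m. \<forall>k. aa k u \<le> 2 * u * qq ^ nat \<bar>k - m\<bar>"
proof (cases "u = 0")
  case True then show ?thesis by (simp add: aa_zero)
next
  case False
  assume "0 \<le> u"
  with False have u: "0 < u" by simp
  from ex_scale[OF u] obtain m :: int where "1 \<le> 2 powr m * u" "2 powr m * u < 2" by blast
  then show ?thesis using aa_decay[OF u] by blast
qed



lemma sqrt_diff_le: "0 \<le> b \<Longrightarrow> b \<le> a \<Longrightarrow> 0 < a \<Longrightarrow> sqrt a - sqrt b \<le> (a - b) / sqrt a"
proof -
  assume ab: "0 \<le> b" "b \<le> a" "0 < a"
  have "(sqrt a - sqrt b) * sqrt a \<le> (sqrt a - sqrt b) * (sqrt a + sqrt b)"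
    using ab by (intro mult_left_mono) (auto simp: real_sqrt_le_mono)
  also have "\<dots> = a - b" using ab by (simp add: algebra_simps)
  finally show ?thesis using ab by (simp add: field_simps)
qed

lemma inv_sqrt_pow: "1 / sqrt (2 ^ n) = qq ^ n"
  using sqrt_half_pow[of n] by (simp add: real_sqrt_divide)

lemma aa_lip_decay:
  assumes u: "0 \<le> u" "u \<le> u'"
  shows "\<exists>m. \<forall>k. \<bar>aa k u' - aa k u\<bar> \<le> 4 * (u' - u) * qq ^ nat \<bar>k - m\<bar>"
proof -
  have mono: "aa k u \<le> aa k u'" for k using u by (rule aa_mono)
  consider "u' = 0" | "0 < u'" "2 * u < u'" | "0 < u'" "u' \<le> 2 * u" using u by linarith
  then show ?thesis
  proof cases
    case 1 then have "u = 0" using u by simp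
    with 1 show ?thesis by simp
  next
    case 2
    from ex_scale[OF 2(1)] obtain m :: int where m: "1 \<le> 2 powr m * u'" "2 powr m * u' < 2" by blast
    show ?thesis
    proof (intro exI allI)
      fix k
      have "\<bar>aa k u' - aa k u\<bar> \<le> aa k u'" using mono[of k] aa_nonneg[OF u(1), of k] by simp
      also have "\<dots> \<le> 2 * u' * qq ^ nat \<bar>k - m\<bar>" by (rule aa_decay[OF 2(1) m])
      also have "\<dots> \<le> 4 * (u' - u) * qq ^ nat \<bar>k - m\<bar>"
        using 2 qq_props by (intro mult_right_mono) auto
      finally show "\<bar>aa k u' - aa k u\<bar> \<le> 4 * (u' - u) * qq ^ nat \<bar>k - m\<bar>" .
    qed
  next
    case 3
    from ex_scale[OF 3(1)] obtain m :: int where m: "1 \<le> 2 powr m * u'" "2 powr m * u' < 2" by blast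
    have upos: "0 < u" using 3 by simp
    show ?thesis
    proof (intro exI allI)
      fix k
      define n where "n = nat \<bar>k - m\<bar>"
      define e where "e = (2::real) powr k"
      have epos: "0 < e" by (simp add: e_def)
      have "aa k u' - aa k u \<le> 4 * (u' - u) * qq ^ n"
      proof (cases "m < k")
        case True
        have ek: "e = 2 powr m * 2 ^ n" unfolding e_def n_def using True by (intro powr_shift1) simp
        have n1: "1 \<le> n" using True by (simp add: n_def)
        have "(2::real) ^ n = 2 * 2 ^ (n - 1)" using n1 by (metis Suc_diff_le diff_Suc_1 power_Suc)
        moreover have "(1::real) \<le> 2 ^ (n - 1)" by simp
        ultimately have "(2::real) \<le> 2 ^ n" by linarith
        have eq: "e * u' = 2 ^ n * (2 powr m * u')" using ek by (simp add: mult_ac)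
        have "(2::real) ^ n * 1 \<le> 2 ^ n * (2 powr m * u')" using m(1) by (intro mult_left_mono) auto
        then have eu': "2 ^ n \<le> e * u'" unfolding eq by simp
        have l1: "1 \<le> 2 powr k * u'" using eu' \<open>2 \<le> 2 ^ n\<close> by (simp add: e_def)
        have "e * u' \<le> e * (2 * u)" using 3 epos by (intro mult_left_mono) auto
        then have "e * u' \<le> 2 * (e * u)" by (simp add: mult_ac)
        then have l2: "1 \<le> 2 powr k * u" using eu' \<open>2 \<le> 2 ^ n\<close> unfolding e_def by linarith
        have "aa k u' - aa k u = sqrt (u' / e) - sqrt (u / e)"
          using aa_large[OF _ l1] aa_large[OF _ l2] u 3 by (simp add: e_def)
        also have "\<dots> \<le> (u' / e - u / e) / sqrt (u' / e)"
          using u 3 epos by (intro sqrt_diff_le) (auto simp: divide_right_mono)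
        also have "\<dots> = (u' - u) / (sqrt (u' / e) * e)" using epos by (simp add: field_simps)
        also have "\<dots> = (u' - u) / sqrt (u' * e)" using sqrt_div_mult[OF epos, of u'] 3 by simp
        also have "\<dots> \<le> (u' - u) / sqrt (2 ^ n)"
          using eu' u epos 3 by (intro divide_left_mono real_sqrt_le_mono) (auto simp: mult.commute)
        also have "\<dots> = (u' - u) * qq ^ n" using inv_sqrt_pow[of n] by (simp add: field_simps)
        also have "\<dots> \<le> 4 * (u' - u) * qq ^ n" using u qq_props by (intro mult_right_mono) auto
        finally show ?thesis .
      next
        case False
        show ?thesis
        proof (cases "k = m")
          case True
          have "aa k u' - aa k u = (bb (e * u') - bb (e * u)) / e" by (simp add: aa_def e_def diff_divide_distrib)
          also have "\<dots> \<le> 2 * (e * u' - e * u) / e"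
            using epos u by (intro divide_right_mono bb_lip) (auto intro: mult_left_mono)
          also have "\<dots> = 2 * (u' - u)" using epos by (simp add: field_simps)
          also have "\<dots> \<le> 4 * (u' - u) * qq ^ n" using True u by (simp add: n_def)
          finally show ?thesis .
        next
          case False
          with \<open>\<not> m < k\<close> have km: "k < m" by simp
          have em: "2 powr m = e * 2 ^ n" unfolding e_def n_def using km by (intro powr_shift2) simp
          have n1: "1 \<le> n" using km by (simp add: n_def)
          have "(2::real) ^ n = 2 * 2 ^ (n - 1)" using n1 by (metis Suc_diff_le diff_Suc_1 power_Suc)
          moreover have "(1::real) \<le> 2 ^ (n - 1)" by simp
          ultimately have p2: "(2::real) \<le> 2 ^ n" by linarith
          have eu'2: "e * u' * 2 ^ n < 2" using m(2) em by (simp add: mult_ac)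
          have s1: "e * u' \<le> 1"
          proof -
            have "e * u' * 2 \<le> e * u' * 2 ^ n" using p2 epos 3 by (intro mult_left_mono) auto
            then show ?thesis using eu'2 by simp
          qed
          have "e * u \<le> e * u'" using u epos by (intro mult_left_mono) auto
          then have s2: "e * u \<le> 1" using s1 by linarith
          have "aa k u' - aa k u = e * (u' + u) * (u' - u)"
            using aa_small[of u' k] aa_small[of u k] s1 s2 u 3 unfolding e_def
            by (simp add: power2_eq_square algebra_simps)
          also have "\<dots> \<le> e * (2 * u') * (u' - u)"
            using epos u by (intro mult_right_mono mult_left_mono) auto
          also have "\<dots> = 2 * (e * u' * 2 ^ n) * (u' - u) * (1/2) ^ n"
            by (simp add: power_one_over field_simps)
          also have "\<dots> \<le> 2 * 2 * (u' - u) * (1/2) ^ n"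
            using eu'2 u by (intro mult_right_mono) auto
          also have "\<dots> = 4 * (u' - u) * (1/2) ^ n" by simp
          also have "\<dots> \<le> 4 * (u' - u) * qq ^ n"
            using half_pow_le[of n] u by (intro mult_left_mono) auto
          finally show ?thesis .
        qed
      qed
      then show "\<bar>aa k u' - aa k u\<bar> \<le> 4 * (u' - u) * qq ^ nat \<bar>k - m\<bar>"
        using mono[of k] by (simp add: n_def)
    qed
  qed
qed



lemma cis_diff_eq: "norm (cis a - cis b) = norm (cis (a - b) - 1)"
proof -
  have "cis a - cis b = cis b * (cis (a - b) - 1)" by (simp add: algebra_simps cis_mult)
  then show ?thesis by (simp add: norm_mult)
qed

lemma cis_one_sq: "norm (cis t - 1) ^ 2 = 2 - 2 * cos t"
proof -
  have "norm (cis t - 1) ^ 2 = (cos t - 1) ^ 2 + (sin t) ^ 2"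
    by (simp add: cmod_power2 cis.code)
  also have "\<dots> = 2 - 2 * cos t" using sin_cos_squared_add[of t] by (simp add: power2_eq_square algebra_simps)
  finally show ?thesis .
qed

lemma cis_diff_le_abs: "norm (cis a - cis b) \<le> \<bar>a - b\<bar>"
proof -
  define t where "t = a - b"
  have "norm (cis t - 1) ^ 2 = 4 * (sin (t / 2)) ^ 2"
    using cis_one_sq[of t] cos_double_sin[of "t/2"] by simp
  also have "\<dots> \<le> 4 * (t / 2) ^ 2"
    using abs_le_square_iff[THEN iffD1, OF abs_sin_x_le_abs_x[of "t/2"]] by simp
  also have "\<dots> = \<bar>t\<bar> ^ 2" by (simp add: power2_eq_square)
  finally have "norm (cis t - 1) \<le> \<bar>t\<bar>" by (rule power2_le_imp_le) simp
  then show ?thesis by (simp add: cis_diff_eq t_def)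
qed

lemma cis_diff_le2: "norm (cis a - cis b) \<le> 2"
  using norm_triangle_ineq4[of "cis a" "cis b"] by simp

lemma cis_diff_ge:
  assumes "1 \<le> \<bar>a - b\<bar>" "\<bar>a - b\<bar> \<le> 2"
  shows "3/4 \<le> norm (cis (a::real) - cis b)"
proof -
  define t where "t = \<bar>a - b\<bar>"
  have "cos (a - b) = cos t" by (simp add: t_def)
  have "2 \<le> pi" using pi_ge_two .
  have ct: "cos t \<le> cos (1::real)" using assms \<open>2 \<le> pi\<close> unfolding t_def
    by (intro cos_monotone_0_pi_le) auto
  have "cos (2::real) = 2 * (cos (1::real)) ^ 2 - 1" using cos_double_cos[of "1::real"] by simp
  then have c1: "(cos (1::real)) ^ 2 < 1/2" using cos_two_less_zero by linarith
  have "cos (1::real) \<le> 23/32"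
  proof (rule ccontr)
    assume "\<not> cos (1::real) \<le> 23/32"
    then have "(23/32) ^ 2 \<le> (cos (1::real)) ^ 2" by (intro power_mono) auto
    moreover have "(23/32::real) ^ 2 = 529/1024" by (simp add: power2_eq_square)
    ultimately show False using c1 by linarith
  qed
  then have "(3/4) ^ 2 \<le> norm (cis (a - b) - 1) ^ 2"
    using cis_one_sq[of "a - b"] ct \<open>cos (a - b) = cos t\<close> by (simp add: power2_eq_square)
  then have "3/4 \<le> norm (cis (a - b) - 1)" by (rule power2_le_imp_le) simp
  then show ?thesis by (simp add: cis_diff_eq)
qed

lemma offpt:
  assumes u: "0 \<le> u" and h: "0 < h" and m: "1 \<le> 2 powr m * h" "2 powr m * h < 2"
  shows "aa k u * min 2 (2 powr k * h) \<le> 2 * sqrt (u / 2 powr m) * qq ^ nat \<bar>k - m\<bar>"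
proof (cases "m \<le> k")
  case True
  have "aa k u * min 2 (2 powr k * h) \<le> sqrt (u / 2 powr k) * 2"
    using aa_le_sqrt[OF u, of k] aa_nonneg[OF u, of k] u h by (intro mult_mono) auto
  also have "sqrt (u / 2 powr k) = sqrt ((u / 2 powr m) / 2 ^ nat \<bar>k - m\<bar>)"
    by (simp add: powr_shift1[OF True] field_simps)
  also have "\<dots> = sqrt (u / 2 powr m) * qq ^ nat \<bar>k - m\<bar>" by (rule sqrt_div_pow)
  finally show ?thesis by simp
next
  case False
  then have km: "k \<le> m" by simp
  define e where "e = (2::real) powr k"
  define n where "n = nat \<bar>k - m\<bar>"
  have epos: "0 < e" by (simp add: e_def)
  have em: "2 powr m = e * 2 ^ n" unfolding e_def n_def using km by (intro powr_shift2) simp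
  have "aa k u * min 2 (2 powr k * h) \<le> sqrt (u / e) * (e * h)"
    using aa_le_sqrt[OF u, of k] aa_nonneg[OF u, of k] h u by (intro mult_mono) (auto simp: e_def)
  also have "\<dots> = sqrt (u * e) * h" using sqrt_div_mult[OF epos u] by simp
  also have "u * e = (u * 2 powr m) / 2 ^ n" using em by simp
  also have "sqrt \<dots> = sqrt (u * 2 powr m) * qq ^ n" by (rule sqrt_div_pow)
  also have "sqrt (u * 2 powr m) = sqrt (u / 2 powr m) * 2 powr m"
    using sqrt_div_mult[of "2 powr m" u] u by simp
  also have "sqrt (u / 2 powr m) * 2 powr m * qq ^ n * h = sqrt (u / 2 powr m) * qq ^ n * (2 powr m * h)"
    by (simp add: mult_ac)
  also have "\<dots> \<le> sqrt (u / 2 powr m) * qq ^ n * 2"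
    using m qq_props u by (intro mult_left_mono) auto
  finally show ?thesis by (simp add: n_def mult_ac)
qed

lemma qq_pow8: "qq ^ nat \<bar>(k0 + 8 * j) - k0\<bar> = (1/16) ^ nat \<bar>j\<bar>"
proof -
  have "nat \<bar>(k0 + 8 * j) - k0\<bar> = 2 * (4 * nat \<bar>j\<bar>)" by (simp add: nat_mult_distrib abs_mult)
  then have "qq ^ nat \<bar>(k0 + 8 * j) - k0\<bar> = (qq ^ 2) ^ (4 * nat \<bar>j\<bar>)" by (simp add: power_mult)
  also have "\<dots> = (1/16) ^ nat \<bar>j\<bar>" by (simp add: qq_props power_mult power_one_over)
  finally show ?thesis .
qed



definition tm :: "int \<Rightarrow> real \<Rightarrow> real \<Rightarrow> complex" where
  "tm k x y = of_real (aa k \<bar>y\<bar>) * cis (2 powr k * x)"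

definition blk8 :: "8 \<Rightarrow> int set" where "blk8 r = {k. (of_int k :: 8) = r}"

definition GG :: "8 \<Rightarrow> real \<Rightarrow> real \<Rightarrow> complex" where
  "GG r x y = infsum (\<lambda>k. tm k x y) (blk8 r)"

definition QQ :: real where "QQ = (1 + qq) / (1 - qq)"

lemma QQ_pos: "0 < QQ" using qq_props by (simp add: QQ_def)

lemma norm_tm: "norm (tm k x y) = aa k \<bar>y\<bar>"
  by (simp add: tm_def norm_mult aa_nonneg)

lemma tm_summable: "(\<lambda>k. tm k x y) summable_on B"
proof -
  obtain m where m: "\<And>k. aa k \<bar>y\<bar> \<le> 2 * \<bar>y\<bar> * qq ^ nat \<bar>k - m\<bar>"
    using aa_decay_ex[of "\<bar>y\<bar>"] by auto
  show ?thesis by (rule geo_bound(1)[OF qq_props(1,2), where C="2 * \<bar>y\<bar>" and m=m]) (auto simp: norm_tm m)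
qed

lemma infsum_diff_le:
  fixes f g :: "int \<Rightarrow> complex"
  assumes "f summable_on B" "g summable_on B"
    and "(\<lambda>k. norm (f k - g k)) summable_on B"
  shows "norm (infsum f B - infsum g B) \<le> infsum (\<lambda>k. norm (f k - g k)) B"
proof -
  have "infsum f B - infsum g B = infsum (\<lambda>k. f k + - g k) B"
    using assms infsum_add[of f B "\<lambda>k. - g k"] infsum_uminus[of g B]
    by (simp add: summable_on_uminus)
  also have "\<dots> = infsum (\<lambda>k. f k - g k) B" by simp
  finally show ?thesis using norm_infsum_bound[OF assms(3)] by simp
qed

lemma sum_y_diff:
  "infsum (\<lambda>k. norm (tm k x y - tm k x y')) B \<le> 4 * QQ * \<bar>y - y'\<bar>"
    "(\<lambda>k. norm (tm k x y - tm k x y')) summable_on B"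
proof -
  have eq: "norm (tm k x y - tm k x y') = \<bar>aa k \<bar>y\<bar> - aa k \<bar>y'\<bar>\<bar>" for k
  proof -
    have "tm k x y - tm k x y' = of_real (aa k \<bar>y\<bar> - aa k \<bar>y'\<bar>) * cis (2 powr k * x)"
      by (simp add: tm_def algebra_simps)
    then show ?thesis by (metis norm_mult norm_cis norm_of_real of_real_diff mult_1_right)
  qed
  have "\<exists>m. \<forall>k. \<bar>aa k \<bar>y\<bar> - aa k \<bar>y'\<bar>\<bar> \<le> 4 * \<bar>\<bar>y\<bar> - \<bar>y'\<bar>\<bar> * qq ^ nat \<bar>k - m\<bar>"
  proof (cases "\<bar>y\<bar> \<le> \<bar>y'\<bar>")
    case True
    then show ?thesis using aa_lip_decay[of "\<bar>y\<bar>" "\<bar>y'\<bar>"] by (simp add: abs_minus_commute)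
  next
    case False
    then show ?thesis using aa_lip_decay[of "\<bar>y'\<bar>" "\<bar>y\<bar>"] by simp
  qed
  then obtain m where m: "\<And>k. norm (tm k x y - tm k x y') \<le> 4 * \<bar>\<bar>y\<bar> - \<bar>y'\<bar>\<bar> * qq ^ nat \<bar>k - m\<bar>"
    unfolding eq by blast
  have "infsum (\<lambda>k. norm (tm k x y - tm k x y')) B \<le> 4 * \<bar>\<bar>y\<bar> - \<bar>y'\<bar>\<bar> * QQ"
    unfolding QQ_def by (rule geo_bound(3)[OF qq_props(1,2), where m=m]) (auto simp: m)
  also have "\<dots> \<le> 4 * QQ * \<bar>y - y'\<bar>" using QQ_pos
    by (simp add: mult_ac)
  finally show "infsum (\<lambda>k. norm (tm k x y - tm k x y')) B \<le> 4 * QQ * \<bar>y - y'\<bar>" .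
  show "(\<lambda>k. norm (tm k x y - tm k x y')) summable_on B"
    by (rule geo_bound(2)[OF qq_props(1,2), where C="4 * \<bar>\<bar>y\<bar> - \<bar>y'\<bar>\<bar>" and m=m]) (auto simp: m)
qed

lemma norm_tm_x: "norm (tm k x y - tm k x' y) \<le> aa k \<bar>y\<bar> * min 2 (2 powr k * \<bar>x - x'\<bar>)"
proof -
  have "tm k x y - tm k x' y = of_real (aa k \<bar>y\<bar>) * (cis (2 powr k * x) - cis (2 powr k * x'))"
    by (simp add: tm_def algebra_simps)
  then have "norm (tm k x y - tm k x' y) = aa k \<bar>y\<bar> * norm (cis (2 powr k * x) - cis (2 powr k * x'))"
    by (simp add: norm_mult aa_nonneg)
  moreover have "norm (cis (2 powr k * x) - cis (2 powr k * x')) \<le> min 2 (2 powr k * \<bar>x - x'\<bar>)"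
    using cis_diff_le2 cis_diff_le_abs[of "2 powr k * x" "2 powr k * x'"]
    by (simp add: right_diff_distrib[symmetric] abs_mult)
  ultimately show ?thesis by (simp add: mult_left_mono aa_nonneg)
qed

lemma sum_x_diff:
  "infsum (\<lambda>k. norm (tm k x y - tm k x' y)) B \<le> 2 * QQ * sqrt (\<bar>y\<bar> * \<bar>x - x'\<bar>)"
    "(\<lambda>k. norm (tm k x y - tm k x' y)) summable_on B"
proof -
  have "infsum (\<lambda>k. norm (tm k x y - tm k x' y)) B \<le> 2 * QQ * sqrt (\<bar>y\<bar> * \<bar>x - x'\<bar>) \<and>
    (\<lambda>k. norm (tm k x y - tm k x' y)) summable_on B"
  proof (cases "x = x'")
    case True then show ?thesis using QQ_pos by simp
  next
    case False
    define h where "h = \<bar>x - x'\<bar>"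
    have h: "0 < h" using False by (simp add: h_def)
    from ex_scale[OF h] obtain m :: int where m: "1 \<le> 2 powr m * h" "2 powr m * h < 2" by blast
    have sq: "sqrt (\<bar>y\<bar> / 2 powr m) \<le> sqrt (\<bar>y\<bar> * h)"
    proof (rule real_sqrt_le_mono)
      have "1 / 2 powr m \<le> h" using m by (simp add: field_simps)
      then show "\<bar>y\<bar> / 2 powr m \<le> \<bar>y\<bar> * h" by (metis mult_left_mono abs_ge_zero times_divide_eq_right mult_1_right)
    qed
    have bnd: "norm (tm k x y - tm k x' y) \<le> 2 * sqrt (\<bar>y\<bar> / 2 powr m) * qq ^ nat \<bar>k - m\<bar>" for k
      using norm_tm_x[of k x y x'] offpt[OF abs_ge_zero[of y] h m, of k] by (simp add: h_def)
    have "infsum (\<lambda>k. norm (tm k x y - tm k x' y)) B \<le> 2 * sqrt (\<bar>y\<bar> / 2 powr m) * QQ"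
      unfolding QQ_def by (rule geo_bound(3)[OF qq_props(1,2), where m=m]) (auto simp: bnd)
    also have "\<dots> \<le> 2 * QQ * sqrt (\<bar>y\<bar> * \<bar>x - x'\<bar>)" using sq QQ_pos unfolding h_def
      by (simp add: mult_ac) 
    moreover have "(\<lambda>k. norm (tm k x y - tm k x' y)) summable_on B"
      by (rule geo_bound(2)[OF qq_props(1,2), where C="2 * sqrt (\<bar>y\<bar> / 2 powr m)" and m=m]) (auto simp: bnd)
    ultimately show ?thesis by auto
  qed
  then show "infsum (\<lambda>k. norm (tm k x y - tm k x' y)) B \<le> 2 * QQ * sqrt (\<bar>y\<bar> * \<bar>x - x'\<bar>)"
    "(\<lambda>k. norm (tm k x y - tm k x' y)) summable_on B" by auto
qed

lemma GG_upper:
  "norm (GG r x y - GG r x' y') \<le> 4 * QQ * \<bar>y - y'\<bar> + 2 * QQ * sqrt (\<bar>y'\<bar> * \<bar>x - x'\<bar>)"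
proof -
  have "norm (GG r x y - GG r x y') \<le> 4 * QQ * \<bar>y - y'\<bar>"
    unfolding GG_def using infsum_diff_le[OF tm_summable tm_summable sum_y_diff(2)] sum_y_diff(1)
    by (rule order_trans)
  moreover have "norm (GG r x y' - GG r x' y') \<le> 2 * QQ * sqrt (\<bar>y'\<bar> * \<bar>x - x'\<bar>)"
    unfolding GG_def using infsum_diff_le[OF tm_summable tm_summable sum_x_diff(2)] sum_x_diff(1)
    by (rule order_trans)
  moreover have "norm (GG r x y - GG r x' y') \<le> norm (GG r x y - GG r x y') + norm (GG r x y' - GG r x' y')"
    using norm_triangle_ineq[of "GG r x y - GG r x y'" "GG r x y' - GG r x' y'"] by simp
  ultimately show ?thesis by linarith
qed



lemma infsum_diff_eq:
  fixes f g :: "int \<Rightarrow> complex"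
  assumes "f summable_on B" "g summable_on B"
  shows "infsum f B - infsum g B = infsum (\<lambda>k. f k - g k) B"
proof -
  have "infsum f B - infsum g B = infsum (\<lambda>k. f k + - g k) B"
    using assms infsum_add[of f B "\<lambda>k. - g k"] infsum_uminus[of g B]
    by (simp add: summable_on_uminus)
  then show ?thesis by simp
qed

lemma blk8_minus:
  "blk8 (of_int k0) - {k0} = (\<lambda>j. k0 + 8 * j) ` (- {0})"
proof (rule set_eqI, rule iffI)
  fix k assume "k \<in> blk8 (of_int k0) - {k0}"
  then have "k mod 8 = k0 mod 8" "k \<noteq> k0" by (auto simp: blk8_def blk)
  then have "k = k0 + 8 * ((k - k0) div 8)"
    by (metis add.commute mod_eq_dvd_iff dvd_mult_div_cancel diff_add_cancel)
  moreover have "(k - k0) div 8 \<noteq> 0" using \<open>k \<noteq> k0\<close> calculation by auto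
  ultimately show "k \<in> (\<lambda>j. k0 + 8 * j) ` (- {0})" by (intro image_eqI[where x="(k - k0) div 8"]) auto
next
  fix k assume "k \<in> (\<lambda>j. k0 + 8 * j) ` (- {0})"
  then obtain j :: int where "j \<noteq> 0" "k = k0 + 8 * j" by auto
  then show "k \<in> blk8 (of_int k0) - {k0}" by (simp add: blk8_def blk)
qed

lemma GG_lower:
  assumes h: "0 < \<bar>x - x'\<bar>" and hy: "\<bar>x - x'\<bar> \<le> \<bar>y\<bar>"
    and k0: "1 \<le> 2 powr k0 * \<bar>x - x'\<bar>" "2 powr k0 * \<bar>x - x'\<bar> < 2"
  shows "sqrt (\<bar>y\<bar> / 2 powr k0) / 3 \<le> norm (GG (of_int k0) x y - GG (of_int k0) x' y)"
proof -
  define B where "B = blk8 (of_int k0)"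
  define D where "D k = tm k x y - tm k x' y" for k
  define A where "A = sqrt (\<bar>y\<bar> / 2 powr k0)"
  have A0: "0 \<le> A" by (simp add: A_def)
  have k0B: "k0 \<in> B" by (simp add: B_def blk8_def)
  have Dsum: "D summable_on C" for C
    unfolding D_def by (rule abs_summable_summable[OF sum_x_diff(2)])
  have "GG (of_int k0) x y - GG (of_int k0) x' y = infsum D B"
    unfolding GG_def D_def B_def by (rule infsum_diff_eq[OF tm_summable tm_summable])
  also have "B = insert k0 (B - {k0})" using k0B by auto
  also have "infsum D (insert k0 (B - {k0})) = D k0 + infsum D (B - {k0})"
    by (rule infsum_insert[OF Dsum]) simp
  finally have eq: "GG (of_int k0) x y - GG (of_int k0) x' y = D k0 + infsum D (B - {k0})" .
  have l: "1 \<le> 2 powr k0 * \<bar>y\<bar>"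
    using k0(1) hy by (smt (verit) mult_left_mono powr_ge_zero)
  have aak0: "aa k0 \<bar>y\<bar> = A" unfolding A_def by (rule aa_large[OF abs_ge_zero l])
  have "norm (D k0) = A * norm (cis (2 powr k0 * x) - cis (2 powr k0 * x'))"
  proof -
    have "D k0 = of_real (aa k0 \<bar>y\<bar>) * (cis (2 powr k0 * x) - cis (2 powr k0 * x'))"
      by (simp add: D_def tm_def algebra_simps)
    then show ?thesis by (simp add: norm_mult aak0 A0)
  qed
  moreover have c34: "3/4 \<le> norm (cis (2 powr k0 * x) - cis (2 powr k0 * x'))"
  proof (rule cis_diff_ge)
    have "\<bar>2 powr k0 * x - 2 powr k0 * x'\<bar> = 2 powr k0 * \<bar>x - x'\<bar>"
      by (simp add: right_diff_distrib[symmetric] abs_mult)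
    then show "1 \<le> \<bar>2 powr k0 * x - 2 powr k0 * x'\<bar>" "\<bar>2 powr k0 * x - 2 powr k0 * x'\<bar> \<le> 2"
      using k0 by auto
  qed
  moreover have "A * (3/4) \<le> A * norm (cis (2 powr k0 * x) - cis (2 powr k0 * x'))"
    using c34 A0 by (rule mult_left_mono)
  ultimately have main: "A * (3/4) \<le> norm (D k0)" by simp
  have inj: "inj_on (\<lambda>j::int. k0 + 8 * j) (- {0})" by (auto simp: inj_on_def)
  have bnd: "norm (D (k0 + 8 * j)) \<le> (2 * A) * (1/16) ^ nat \<bar>j - 0\<bar>" for j
  proof -
    have "norm (D (k0 + 8 * j)) \<le> aa (k0 + 8 * j) \<bar>y\<bar> * min 2 (2 powr (k0 + 8 * j) * \<bar>x - x'\<bar>)"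
      unfolding D_def by (rule norm_tm_x)
    also have "\<dots> \<le> 2 * A * qq ^ nat \<bar>(k0 + 8 * j) - k0\<bar>"
      unfolding A_def by (rule offpt[OF abs_ge_zero h k0])
    also have "\<dots> = 2 * A * (1/16) ^ nat \<bar>j - 0\<bar>" by (simp only: qq_pow8 diff_zero)
    finally show ?thesis .
  qed
  have "infsum (\<lambda>k. norm (D k)) (B - {k0}) = infsum ((\<lambda>k. norm (D k)) \<circ> (\<lambda>j. k0 + 8 * j)) (- {0})"
    unfolding B_def blk8_minus by (rule infsum_reindex[OF inj])
  also have "\<dots> \<le> (2 * A) * (2 * (1/16) / (1 - 1/16))"
    unfolding comp_def by (rule geo_bound(4)[where m=0]) (use bnd A0 in auto)
  finally have rest: "infsum (\<lambda>k. norm (D k)) (B - {k0}) \<le> A * (4/15)" by simp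
  have "norm (infsum D (B - {k0})) \<le> infsum (\<lambda>k. norm (D k)) (B - {k0})"
    by (rule norm_infsum_bound) (unfold D_def, rule sum_x_diff(2))
  then have "norm (infsum D (B - {k0})) \<le> A * (4/15)" using rest by linarith
  moreover have "norm (D k0) - norm (infsum D (B - {k0})) \<le> norm (D k0 + infsum D (B - {k0}))"
    using norm_diff_ineq[of "D k0" "infsum D (B - {k0})"] by simp
  ultimately have "A * (3/4) - A * (4/15) \<le> norm (GG (of_int k0) x y - GG (of_int k0) x' y)"
    using main unfolding eq by linarith
  moreover have "A / 3 \<le> A * (3/4) - A * (4/15)" using A0 by simp
  ultimately show ?thesis unfolding A_def by linarith
qed



lemma sqrt_le_of_sq: "0 \<le> c \<Longrightarrow> a \<le> c ^ 2 \<Longrightarrow> sqrt a \<le> c"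
  using real_sqrt_le_mono[of a "c^2"] by simp

lemma key_upper:
  fixes x y x' y' N :: real
  defines "h \<equiv> \<bar>x - x'\<bar>" and "\<delta> \<equiv> \<bar>y - y'\<bar>"
  assumes Nup: "N \<le> (\<Sum>r\<in>UNIV. norm (GG r x y - GG r x' y')) + h + \<delta>"
  shows "N \<le> (64 * QQ + 2) * (h + \<delta> + sqrt (h * \<bar>y + y'\<bar> / 2))"
proof -
  define d where "d = h + \<delta> + sqrt (h * \<bar>y + y'\<bar> / 2)"
  have h0: "0 \<le> h" and d0: "0 \<le> \<delta>" by (auto simp: h_def \<delta>_def)
  have s0: "0 \<le> sqrt (h * \<bar>y + y'\<bar> / 2)" using h0 by simp
  have "sqrt (\<bar>y'\<bar> * h) \<le> sqrt (h * \<bar>y + y'\<bar> / 2 + h * \<delta> / 2)"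
  proof (rule real_sqrt_le_mono)
    have "\<bar>(y + y') - (y - y')\<bar> \<le> \<bar>y + y'\<bar> + \<bar>y - y'\<bar>" by (rule abs_triangle_ineq4)
    then have "\<bar>y'\<bar> \<le> \<bar>y + y'\<bar> / 2 + \<delta> / 2" unfolding \<delta>_def by (simp add: abs_mult)
    then have "h * \<bar>y'\<bar> \<le> h * (\<bar>y + y'\<bar> / 2 + \<delta> / 2)" using h0 by (rule mult_left_mono)
    then show "\<bar>y'\<bar> * h \<le> h * \<bar>y + y'\<bar> / 2 + h * \<delta> / 2" by (simp add: algebra_simps)
  qed
  also have "\<dots> \<le> sqrt (h * \<bar>y + y'\<bar> / 2) + sqrt (h * \<delta> / 2)"
    by (rule sqrt_add_le_add_sqrt) (use h0 d0 in auto)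
  finally have sy0: "sqrt (\<bar>y'\<bar> * h) \<le> sqrt (h * \<bar>y + y'\<bar> / 2) + sqrt (h * \<delta> / 2)" .
  have "sqrt (h * \<delta> / 2) \<le> h + \<delta>"
    by (rule sqrt_le_of_sq) (use h0 d0 in \<open>auto simp: power2_eq_square algebra_simps\<close>)
  with sy0 have "sqrt (\<bar>y'\<bar> * h) \<le> 2 * h + 2 * \<delta> + 2 * sqrt (h * \<bar>y + y'\<bar> / 2)" using s0 h0 d0 by linarith
  then have sy: "sqrt (\<bar>y'\<bar> * h) \<le> 2 * d" unfolding d_def by (simp add: algebra_simps)
  have each: "norm (GG r x y - GG r x' y') \<le> 4 * QQ * \<delta> + 2 * QQ * (2 * d)" for r
  proof -
    have "norm (GG r x y - GG r x' y') \<le> 4 * QQ * \<delta> + 2 * QQ * sqrt (\<bar>y'\<bar> * h)"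
      using GG_upper[of r x y x' y'] by (simp add: h_def \<delta>_def)
    also have "\<dots> \<le> 4 * QQ * \<delta> + 2 * QQ * (2 * d)" using sy QQ_pos by simp
    finally show ?thesis .
  qed
  have "(\<Sum>r\<in>UNIV. norm (GG r x y - GG r x' y')) \<le> of_nat (card (UNIV :: 8 set)) * (4 * QQ * \<delta> + 2 * QQ * (2 * d))"
    by (rule sum_bounded_above) (rule each)
  then have S: "(\<Sum>r\<in>UNIV. norm (GG r x y - GG r x' y')) \<le> 32 * (QQ * \<delta>) + 32 * (QQ * d)"
    by (simp add: algebra_simps)
  have "\<delta> \<le> d" "h \<le> d" using s0 h0 d0 by (auto simp: d_def)
  moreover have "QQ * \<delta> \<le> QQ * d" using QQ_pos \<open>\<delta> \<le> d\<close> by simp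
  ultimately have "N \<le> 2 * d + 64 * (QQ * d)" using Nup S by linarith
  then show ?thesis unfolding d_def[symmetric] by (simp add: algebra_simps)
qed

lemma key_lower:
  fixes x y x' y' N :: real
  defines "h \<equiv> \<bar>x - x'\<bar>" and "\<delta> \<equiv> \<bar>y - y'\<bar>"
  assumes hN: "h \<le> N" and dN: "\<delta> \<le> N" and GN: "\<And>r. norm (GG r x y - GG r x' y') \<le> N"
  shows "h + \<delta> + sqrt (h * \<bar>y + y'\<bar> / 2) \<le> (11 + 24 * QQ) * N"
proof -
  have h0: "0 \<le> h" and d0: "0 \<le> \<delta>" by (auto simp: h_def \<delta>_def)
  have N0: "0 \<le> N" using hN h0 by simp
  have yy: "\<bar>y + y'\<bar> / 2 \<le> \<bar>y\<bar> + \<delta> / 2" unfolding \<delta>_def abs_real_def by (auto split: if_splits; linarith)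
  have s1: "sqrt (h * \<bar>y + y'\<bar> / 2) \<le> sqrt (h * \<bar>y\<bar>) + (h + \<delta>)"
  proof -
    have "sqrt (h * \<bar>y + y'\<bar> / 2) \<le> sqrt (h * \<bar>y\<bar> + h * \<delta> / 2)"
    proof (rule real_sqrt_le_mono)
      have "h * (\<bar>y + y'\<bar> / 2) \<le> h * (\<bar>y\<bar> + \<delta> / 2)" using yy h0 by (rule mult_left_mono)
      then show "h * \<bar>y + y'\<bar> / 2 \<le> h * \<bar>y\<bar> + h * \<delta> / 2" by (simp add: algebra_simps)
    qed
    also have "\<dots> \<le> sqrt (h * \<bar>y\<bar>) + sqrt (h * \<delta> / 2)"
      by (rule sqrt_add_le_add_sqrt) (use h0 d0 in auto)
    finally have "sqrt (h * \<bar>y + y'\<bar> / 2) \<le> sqrt (h * \<bar>y\<bar>) + sqrt (h * \<delta> / 2)" .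
    moreover have "sqrt (h * \<delta> / 2) \<le> h + \<delta>"
      by (rule sqrt_le_of_sq) (use h0 d0 in \<open>auto simp: power2_eq_square algebra_simps\<close>)
    ultimately show ?thesis by linarith
  qed
  have qn: "0 \<le> QQ * N" using N0 QQ_pos by simp
  consider "h = 0" | "0 < h" "\<bar>y\<bar> < h" | "0 < h" "h \<le> \<bar>y\<bar>" using h0 by linarith
  then have "sqrt (h * \<bar>y\<bar>) \<le> h + 6 * N + 24 * (QQ * N)"
  proof cases
    case 1 then show ?thesis using N0 qn by simp
  next
    case 2
    have "sqrt (h * \<bar>y\<bar>) \<le> h"
      by (rule sqrt_le_of_sq) (use 2 h0 in \<open>auto simp: power2_eq_square intro: mult_left_mono\<close>)
    then show ?thesis using N0 qn by linarith
  next
    case 3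
    have hpos: "0 < \<bar>x - x'\<bar>" using 3 by (simp add: h_def)
    from ex_scale[OF 3(1)] obtain k0 :: int where k0: "1 \<le> 2 powr k0 * h" "2 powr k0 * h < 2" by blast
    have low: "sqrt (\<bar>y\<bar> / 2 powr k0) / 3 \<le> norm (GG (of_int k0) x y - GG (of_int k0) x' y)"
      using GG_lower[OF hpos] 3 k0 by (simp add: h_def)
    have t1: "norm (GG (of_int k0) x y - GG (of_int k0) x' y)
        \<le> norm (GG (of_int k0) x y - GG (of_int k0) x' y') + norm (GG (of_int k0) x' y' - GG (of_int k0) x' y)"
      using norm_triangle_ineq[of "GG (of_int k0) x y - GG (of_int k0) x' y'" "GG (of_int k0) x' y' - GG (of_int k0) x' y"]
      by simp
    have t2: "norm (GG (of_int k0) x' y' - GG (of_int k0) x' y) \<le> 4 * QQ * \<delta>"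
      using GG_upper[of "of_int k0" x' y' x' y] by (simp add: \<delta>_def abs_minus_commute)
    have t3: "4 * QQ * \<delta> \<le> 4 * (QQ * N)" using dN QQ_pos by (simp add: mult_left_mono)
    have "sqrt (\<bar>y\<bar> / 2 powr k0) \<le> 3 * N + 12 * (QQ * N)"
      using low t1 t2 t3 GN[of "of_int k0"] by linarith
    moreover have "sqrt (h * \<bar>y\<bar>) \<le> 2 * sqrt (\<bar>y\<bar> / 2 powr k0)"
    proof -
      have "h * \<bar>y\<bar> \<le> 4 * (\<bar>y\<bar> / 2 powr k0)"
      proof -
        have "h \<le> 2 / 2 powr k0" using k0(2) by (simp add: field_simps)
        then have "h * \<bar>y\<bar> \<le> (2 / 2 powr k0) * \<bar>y\<bar>" by (rule mult_right_mono) simp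
        also have "\<dots> \<le> 4 * (\<bar>y\<bar> / 2 powr k0)" by (simp add: divide_right_mono)
        finally show ?thesis .
      qed
      then have "sqrt (h * \<bar>y\<bar>) \<le> sqrt (4 * (\<bar>y\<bar> / 2 powr k0))" by (rule real_sqrt_le_mono)
      also have "\<dots> = sqrt 4 * sqrt (\<bar>y\<bar> / 2 powr k0)" by (rule real_sqrt_mult)
      also have "sqrt (4::real) = 2" using real_sqrt_abs[of "2::real"] by simp
      finally show ?thesis .
    qed
    ultimately show ?thesis using N0 qn h0 by linarith
  qed
  then have "h + \<delta> + sqrt (h * \<bar>y + y'\<bar> / 2) \<le> 11 * N + 24 * (QQ * N)" using s1 hN dN by linarith
  then show ?thesis by (simp add: algebra_simps)
qed



definition Phi :: "real \<times> real \<times> real \<Rightarrow> (complex^8) \<times> real \<times> real \<times> real" where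
  "Phi p = (case p of (x, y, z) \<Rightarrow> ((\<chi> r. GG r x y), x, y, 0))"

lemma Phi_diff: "Phi (x, y, z) - Phi (x', y', z') = ((\<chi> r. GG r x y - GG r x' y'), x - x', y - y', 0)"
  by (simp add: Phi_def vec_eq_iff)

lemma norm_vec_le_sum: "norm (v :: complex^8) \<le> (\<Sum>r\<in>UNIV. norm (v $ r))"
  unfolding norm_vec_def by (rule L2_set_le_sum) simp

lemma Phi_bounds:
  fixes x y z x' y' z' :: real
  defines "N \<equiv> norm (Phi (x, y, z) - Phi (x', y', z'))"
  shows "\<bar>x - x'\<bar> \<le> N" "\<bar>y - y'\<bar> \<le> N" "\<And>r. norm (GG r x y - GG r x' y') \<le> N"
    "N \<le> (\<Sum>r\<in>UNIV. norm (GG r x y - GG r x' y')) + \<bar>x - x'\<bar> + \<bar>y - y'\<bar>"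
proof -
  define V where "V = (\<chi> r. GG r x y - GG r x' y')"
  have N: "N = norm (V, x - x', y - y', 0::real)" unfolding N_def V_def Phi_diff ..
  have a: "norm (x - x', y - y', 0::real) \<le> N" unfolding N by (rule norm_snd_le)
  have "norm (x - x') \<le> norm (x - x', y - y', 0::real)" by (rule norm_fst_le)
  with a show "\<bar>x - x'\<bar> \<le> N" by simp
  have "norm (y - y') \<le> norm (y - y', 0::real)" by (rule norm_fst_le)
  also have "\<dots> \<le> norm (x - x', y - y', 0::real)" by (rule norm_snd_le)
  finally show "\<bar>y - y'\<bar> \<le> N" using a by simp
  have V: "norm V \<le> N" unfolding N by (rule norm_fst_le)
  fix r
  have "norm (V $ r) \<le> norm V" by (rule Finite_Cartesian_Product.norm_nth_le)
  then show "norm (GG r x y - GG r x' y') \<le> N" using V by (simp add: V_def)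
next
  define V where "V = (\<chi> r. GG r x y - GG r x' y')"
  have N: "N = norm (V, x - x', y - y', 0::real)" unfolding N_def V_def Phi_diff ..
  have "N \<le> norm V + norm (x - x', y - y', 0::real)" unfolding N by (rule norm_Pair_le)
  also have "norm (x - x', y - y', 0::real) \<le> norm (x - x') + norm (y - y', 0::real)" by (rule norm_Pair_le)
  also have "norm (y - y', 0::real) \<le> norm (y - y') + norm (0::real)" by (rule norm_Pair_le)
  also have "norm V \<le> (\<Sum>r\<in>UNIV. norm (V $ r))" by (rule norm_vec_le_sum)
  finally show "N \<le> (\<Sum>r\<in>UNIV. norm (GG r x y - GG r x' y')) + \<bar>x - x'\<bar> + \<bar>y - y'\<bar>"
    by (simp add: V_def)
qed

lemma dims: "dim (UNIV :: ((complex^8) \<times> real \<times> real \<times> real) set) = dim (UNIV :: (real^19) set)"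
  by (simp add: dim_UNIV)

theorem proposition5p6:
  shows "bilip_embeds heis_dist heis_plane TYPE(real ^ 19)"
proof -
  obtain f :: "(complex^8) \<times> real \<times> real \<times> real \<Rightarrow> real^19" and g
    where lin: "linear f" "linear g" "f ` UNIV = UNIV" "g ` UNIV = UNIV"
      and iso0: "\<And>v. v \<in> UNIV \<Longrightarrow> norm (f v) = norm v"
      and "\<And>v. v \<in> UNIV \<Longrightarrow> norm (g v) = norm v"
      and "\<And>v. v \<in> UNIV \<Longrightarrow> g (f v) = v" "\<And>v. v \<in> UNIV \<Longrightarrow> f (g v) = v"
    using isometries_subspaces[OF subspace_UNIV subspace_UNIV dims] by blast
  have iso: "norm (f v) = norm v" for v using iso0 by simp
  define L where "L = 64 * QQ + 11"
  have L1: "1 \<le> L" using QQ_pos by (simp add: L_def)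
  have main: "heis_dist a b / L \<le> norm (f (Phi a) - f (Phi b)) \<and> norm (f (Phi a) - f (Phi b)) \<le> L * heis_dist a b"
    if a: "a \<in> heis_plane" and b: "b \<in> heis_plane" for a b
  proof -
    obtain x y z where az: "a = (x, y, z)" "z = 1/2 * x * y" using a by (auto simp: heis_plane_def)
    obtain x' y' z' where bz: "b = (x', y', z')" "z' = 1/2 * x' * y'" using b by (auto simp: heis_plane_def)
    have eqz: "\<bar>z - z' + 1/2 * (x * y' - x' * y)\<bar> = \<bar>x - x'\<bar> * \<bar>y + y'\<bar> / 2"
    proof -
      have "z - z' + 1/2 * (x * y' - x' * y) = (x - x') * (y + y') / 2" using az(2) bz(2) by (simp add: algebra_simps)
      then have "\<bar>z - z' + 1/2 * (x * y' - x' * y)\<bar> = \<bar>(x - x') * (y + y') / 2\<bar>" by (simp only:)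
      then show ?thesis by (simp add: abs_mult)
    qed
    define d where "d = \<bar>x - x'\<bar> + \<bar>y - y'\<bar> + sqrt (\<bar>x - x'\<bar> * \<bar>y + y'\<bar> / 2)"
    have hd: "heis_dist a b = d" unfolding heis_dist_def az(1) bz(1) d_def using eqz by simp
    define N where "N = norm (Phi (x, y, z) - Phi (x', y', z'))"
    have fN: "norm (f (Phi a) - f (Phi b)) = N"
      unfolding N_def az(1) bz(1) linear_diff[OF lin(1), symmetric] iso ..
    have d0: "0 \<le> d" by (simp add: d_def)
    have lo: "d \<le> (11 + 24 * QQ) * N"
      unfolding d_def N_def by (rule key_lower[OF Phi_bounds(1,2,3)])
    have up: "N \<le> (64 * QQ + 2) * d"
      unfolding d_def N_def by (rule key_upper[OF Phi_bounds(4)])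
    have N0: "0 \<le> N" by (simp add: N_def)
    have "(11 + 24 * QQ) * N \<le> L * N" using QQ_pos N0 by (intro mult_right_mono) (auto simp: L_def)
    then have "d \<le> L * N" using lo by linarith
    then have "d / L \<le> N" using L1 by (simp add: field_simps)
    moreover have "(64 * QQ + 2) * d \<le> L * d" using QQ_pos d0 by (intro mult_right_mono) (auto simp: L_def)
    ultimately have "d / L \<le> N \<and> N \<le> L * d" using up by linarith
    then show ?thesis using hd fN by simp
  qed
  show ?thesis unfolding bilip_embeds_def
    by (intro exI[of _ L] exI[of _ "\<lambda>p. f (Phi p)"] conjI L1 ballI main)
qed

end
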